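(* Let $X$ be a continuum and $Y\subset X$ a totally disconnected subset. If $y\in\Lambda(Y)$, then $F(y)$ is a non-degenerate subcontinuum of $X$ and $F(y)\cap Y=\{y\}$.
   Context: A continuum is a compact connected metric space. For $Y\subset X$ and $y\in Y$, let $\mathcal U_y$ be the collection of all open subsets $U$ of $X$ with $y\in U$ and $\partial U\subset X\setminus Y$ (boundary taken in $X$), and put $F(y)=\bigcap_{U\in\mathcal U_y}\overline U$. $Y$ is totally disconnected if every two distinct points of $Y$ lie in disjoint clopen subsets of $Y$. $Y$ is zero-dimensional at $y$ if $y$ has a neighborhood basis in $Y$ of clopen subsets of $Y$; $\Lambda(Y)$ is the set of points at which $Y$ is not zero-dimensional. *)

theory Defs
  imports "HOL-Analysis.Analysis"
begin

definition continuum :: "'a::metric_space set \<Rightarrow> bool" where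
  "continuum X \<longleftrightarrow> X \<noteq> {} \<and> compact X \<and> connected X"

definition clopen_in :: "'a::topological_space set \<Rightarrow> 'a set \<Rightarrow> bool" where
  "clopen_in Y C \<longleftrightarrow> openin (top_of_set Y) C \<and> closedin (top_of_set Y) C"

definition totally_disconnected_set :: "'a::topological_space set \<Rightarrow> bool" where
  "totally_disconnected_set Y \<longleftrightarrow>
     (\<forall>a\<in>Y. \<forall>b\<in>Y. a \<noteq> b \<longrightarrow>
        (\<exists>A B. clopen_in Y A \<and> clopen_in Y B \<and> a \<in> A \<and> b \<in> B \<and> A \<inter> B = {}))"

definition zero_dim_at :: "'a::topological_space set \<Rightarrow> 'a \<Rightarrow> bool" where
  "zero_dim_at Y y \<longleftrightarrow>
     (\<forall>V. openin (top_of_set Y) V \<and> y \<in> V \<longrightarrow> (\<exists>C. clopen_in Y C \<and> y \<in> C \<and> C \<subseteq> V))"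

definition Lambda_set :: "'a::topological_space set \<Rightarrow> 'a set" where
  "Lambda_set Y = {y \<in> Y. \<not> zero_dim_at Y y}"

definition F_set :: "'a::topological_space set \<Rightarrow> 'a set \<Rightarrow> 'a \<Rightarrow> 'a set" where
  "F_set X Y y = \<Inter> {(top_of_set X) closure_of U | U.
       openin (top_of_set X) U \<and> y \<in> U \<and> (top_of_set X) frontier_of U \<subseteq> X - Y}"

end

theory Submission
  imports Defs
begin

definition UU :: "'a::metric_space set \<Rightarrow> 'a set \<Rightarrow> 'a \<Rightarrow> 'a set set" where
  "UU X Y y = {U. openin (top_of_set X) U \<and> y \<in> U \<and> (closure U - U) \<inter> Y = {}}"

lemma cl_eq:
  assumes "closed X" "openin (top_of_set X) U"
  shows "(top_of_set X) closure_of U = closure U" "closure U \<subseteq> X"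
proof -
  have "U \<subseteq> X" using assms(2) openin_imp_subset by auto
  then show "closure U \<subseteq> X" using assms(1) closure_minimal by blast
  then show "(top_of_set X) closure_of U = closure U"
    using \<open>U \<subseteq> X\<close> by (simp add: closure_of_subtopology Int_absorb1 Int_absorb2)
qed

lemma F_eq:
  assumes "closed X" "Y \<subseteq> X"
  shows "F_set X Y y = \<Inter> (closure ` UU X Y y)"
proof -
  have "{(top_of_set X) closure_of U | U.
       openin (top_of_set X) U \<and> y \<in> U \<and> (top_of_set X) frontier_of U \<subseteq> X - Y}
      = closure ` UU X Y y"
  proof -
    have *: "openin (top_of_set X) U \<Longrightarrow>
       (top_of_set X) frontier_of U \<subseteq> X - Y \<longleftrightarrow> (closure U - U) \<inter> Y = {}" for U
      using cl_eq[OF assms(1), of U]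
      by (auto simp: frontier_of_def interior_of_openin)
    show ?thesis
    proof (rule set_eqI, rule iffI)
      fix A assume "A \<in> {(top_of_set X) closure_of U | U.
       openin (top_of_set X) U \<and> y \<in> U \<and> (top_of_set X) frontier_of U \<subseteq> X - Y}"
      then show "A \<in> closure ` UU X Y y" unfolding UU_def using cl_eq[OF assms(1)] * by auto
    next
      fix A assume "A \<in> closure ` UU X Y y"
      then obtain U where U: "U \<in> UU X Y y" "A = closure U" by auto
      then show "A \<in> {(top_of_set X) closure_of U | U.
       openin (top_of_set X) U \<and> y \<in> U \<and> (top_of_set X) frontier_of U \<subseteq> X - Y}"
        unfolding UU_def using cl_eq[OF assms(1), of U] *[of U] by auto
    qed
  qed
  then show ?thesis unfolding F_set_def by simp
qed

lemma UU_X: "closed X \<Longrightarrow> y \<in> X \<Longrightarrow> X \<in> UU X Y y"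
  unfolding UU_def by (simp add: closure_closed)

lemma key:
  assumes "compact X" "y \<in> X" "open W" "\<Inter> (closure ` UU X Y y) \<subseteq> W"
  shows "\<exists>U\<in>UU X Y y. closure U \<subseteq> W"
proof -
  have cX: "closed X" using assms(1) compact_imp_closed by auto
  have "(X - W) \<inter> \<Inter> (closure ` UU X Y y) = {}" using assms(4) by auto
  moreover have "compact (X - W)" using assms(1,3) by (simp add: Diff_eq compact_Int_closed closed_Compl)
  ultimately obtain F' where F': "finite F'" "F' \<subseteq> closure ` UU X Y y" "(X - W) \<inter> \<Inter>F' = {}"
    using compact_imp_fip[of "X - W" "closure ` UU X Y y"] by blast
  then obtain U' where U': "finite U'" "U' \<subseteq> UU X Y y" "F' = closure ` U'"
    by (meson finite_subset_image)
  define U0 where "U0 = \<Inter> (insert X U')"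
  have op: "openin (top_of_set X) U0" unfolding U0_def
    using U'(1,2) by (intro openin_Inter) (auto simp: UU_def)
  have yU: "y \<in> U0" unfolding U0_def using U'(2) assms(2) by (auto simp: UU_def)
  have clX: "closure U0 \<subseteq> X" using cl_eq(2)[OF cX op] .
  have clU: "closure U0 \<subseteq> closure U" if "U \<in> U'" for U
    by (rule closure_mono) (use that in \<open>auto simp: U0_def\<close>)
  have fr: "(closure U0 - U0) \<inter> Y = {}"
  proof (rule ccontr)
    assume "(closure U0 - U0) \<inter> Y \<noteq> {}"
    then obtain x where x: "x \<in> closure U0" "x \<notin> U0" "x \<in> Y" by auto
    then obtain U where "U \<in> U'" "x \<notin> U" using clX unfolding U0_def by auto
    moreover have "x \<in> closure U" using clU[OF \<open>U \<in> U'\<close>] x(1) by auto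
    ultimately show False using U'(2) x(3) by (auto simp: UU_def)
  qed
  have "U0 \<in> UU X Y y" using op yU fr by (simp add: UU_def)
  moreover have "closure U0 \<subseteq> W"
  proof
    fix x assume x: "x \<in> closure U0"
    show "x \<in> W"
    proof (rule ccontr)
      assume "x \<notin> W"
      then have "x \<in> (X - W) \<inter> \<Inter>F'" using x clX clU U'(3) by auto
      then show False using F'(3) by blast
    qed
  qed
  ultimately show ?thesis by blast
qed

lemma sep:
  fixes A B :: "'a::metric_space set"
  assumes "A \<noteq> {}" "B \<noteq> {}" "A \<inter> closure B = {}" "B \<inter> closure A = {}"
  obtains U V where "open U" "open V" "U \<inter> V = {}" "A \<subseteq> U" "B \<subseteq> V"
proof -
  define U where "U = {x. infdist x A < infdist x B}"
  define V where "V = {x. infdist x B < infdist x A}"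
  have "open U" unfolding U_def
    by (intro open_Collect_less continuous_intros)
  moreover have "open V" unfolding V_def
    by (intro open_Collect_less continuous_intros)
  moreover have "U \<inter> V = {}" unfolding U_def V_def by auto
  moreover have "A \<subseteq> U"
  proof
    fix a assume "a \<in> A"
    then have "infdist a A = 0" using assms(1) in_closure_iff_infdist_zero closure_subset by blast
    moreover have "infdist a B \<noteq> 0" using \<open>a \<in> A\<close> assms(2,3) in_closure_iff_infdist_zero by blast
    ultimately show "a \<in> U" unfolding U_def using infdist_nonneg[of a B] by auto
  qed
  moreover have "B \<subseteq> V"
  proof
    fix a assume "a \<in> B"
    then have "infdist a B = 0" using assms(2) in_closure_iff_infdist_zero closure_subset by blast
    moreover have "infdist a A \<noteq> 0" using \<open>a \<in> B\<close> assms(1,4) in_closure_iff_infdist_zero by blast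
    ultimately show "a \<in> V" unfolding V_def using infdist_nonneg[of a A] by auto
  qed
  ultimately show ?thesis using that by blast
qed

lemma conn_aux:
  fixes X Y :: "'a::metric_space set"
  assumes cX: "compact X" and yX: "y \<in> X"
    and e: "closed e1" "closed e2" "\<Inter> (closure ` UU X Y y) \<subseteq> e1 \<union> e2"
      "e1 \<inter> e2 \<inter> \<Inter> (closure ` UU X Y y) = {}" "y \<in> e1"
  shows "e2 \<inter> \<Inter> (closure ` UU X Y y) = {}"
proof (rule ccontr)
  define F where "F = \<Inter> (closure ` UU X Y y)"
  assume "e2 \<inter> \<Inter> (closure ` UU X Y y) \<noteq> {}"
  then have Qne: "e2 \<inter> F \<noteq> {}" unfolding F_def .
  have yF: "y \<in> F" unfolding F_def UU_def using closure_subset by fastforce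
  have clF: "closed F" unfolding F_def by auto
  have c1: "closed (e1 \<inter> F)" "closed (e2 \<inter> F)" using e clF by auto
  have "e1 \<inter> F \<noteq> {}" using yF e(5) by auto
  moreover have "(e1 \<inter> F) \<inter> closure (e2 \<inter> F) = {}" "(e2 \<inter> F) \<inter> closure (e1 \<inter> F) = {}"
    using c1 e(4) unfolding F_def by (auto simp: closure_closed)
  ultimately obtain G H where GH: "open G" "open H" "G \<inter> H = {}" "e1 \<inter> F \<subseteq> G" "e2 \<inter> F \<subseteq> H"
    using sep[of "e1 \<inter> F" "e2 \<inter> F"] Qne by metis
  have "F \<subseteq> G \<union> H" using GH e(3) unfolding F_def by auto
  then obtain U where U: "U \<in> UU X Y y" "closure U \<subseteq> G \<union> H"
    using key[OF cX yX, of "G \<union> H" Y] GH unfolding F_def by auto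
  obtain T' where T': "open T'" "U = X \<inter> T'" using U(1) unfolding UU_def by (auto simp: openin_open)
  have yG: "y \<in> G" using yF e(5) GH(4) by auto
  have op: "openin (top_of_set X) (U \<inter> G)"
    using T' GH(1) by (metis inf_assoc openin_open_Int open_Int)
  have clH: "closure (U \<inter> G) \<inter> H = {}"
    using GH open_Int_closure_eq_empty[of H "U \<inter> G"] by (auto simp: Int_commute)
  have clU: "closure (U \<inter> G) \<subseteq> closure U" by (simp add: closure_mono)
  have "(closure (U \<inter> G) - U \<inter> G) \<inter> Y = {}"
  proof (rule ccontr)
    assume "(closure (U \<inter> G) - U \<inter> G) \<inter> Y \<noteq> {}"
    then obtain x where x: "x \<in> closure (U \<inter> G)" "x \<notin> U \<inter> G" "x \<in> Y" by auto
    have "x \<in> G" using x(1) clH clU U(2) by auto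
    then have "x \<in> closure U - U" using x clU by auto
    then show False using U(1) x(3) unfolding UU_def by auto
  qed
  then have "U \<inter> G \<in> UU X Y y" using op U(1) yG unfolding UU_def by auto
  then have "F \<subseteq> closure (U \<inter> G)" unfolding F_def by auto
  then show False using Qne GH(5) clH by auto
qed

theorem lemma1:
  fixes X Y :: "'a::metric_space set" and y :: 'a
  assumes "continuum X" and "Y \<subseteq> X" and "totally_disconnected_set Y"
    and "y \<in> Lambda_set Y"
  shows "F_set X Y y \<subseteq> X \<and> compact (F_set X Y y) \<and> connected (F_set X Y y)
         \<and> (\<exists>a\<in>F_set X Y y. \<exists>b\<in>F_set X Y y. a \<noteq> b)
         \<and> F_set X Y y \<inter> Y = {y}"
proof -
  have cX: "compact X" using assms(1) unfolding continuum_def by auto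
  then have clX: "closed X" by (simp add: compact_imp_closed)
  have yY: "y \<in> Y" and nz: "\<not> zero_dim_at Y y" using assms(4) unfolding Lambda_set_def by auto
  have yX: "y \<in> X" using yY assms(2) by auto
  define F where "F = F_set X Y y"
  have Feq: "F = \<Inter> (closure ` UU X Y y)" unfolding F_def using F_eq[OF clX assms(2)] .
  have sub: "F \<subseteq> X" unfolding Feq using UU_X[OF clX yX, of Y] clX closure_closed by fastforce
  have clF: "closed F" unfolding Feq by auto
  have cF: "compact F" using compact_Int_closed[OF cX clF] sub by (simp add: Int_absorb1)
  have yF: "y \<in> F" unfolding Feq UU_def using closure_subset by fastforce
  have con: "connected F"
    unfolding connected_closed
  proof (rule notI, elim exE conjE)
    fix e1 e2 assume e: "closed e1" "closed e2" "F \<subseteq> e1 \<union> e2" "e1 \<inter> e2 \<inter> F = {}"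
      "e1 \<inter> F \<noteq> {}" "e2 \<inter> F \<noteq> {}"
    show False
    proof (cases "y \<in> e1")
      case True
      then show ?thesis using conn_aux[OF cX yX e(1,2), of Y] e unfolding Feq by auto
    next
      case False
      then have "y \<in> e2" using e(3) yF by auto
      then show ?thesis using conn_aux[OF cX yX e(2,1), of Y] e unfolding Feq by (auto simp: Un_commute Int_commute)
    qed
  qed
  have FY: "F \<inter> Y = {y}"
  proof (rule ccontr)
    assume "F \<inter> Y \<noteq> {y}"
    then obtain z where z: "z \<in> F" "z \<in> Y" "z \<noteq> y" using yF yY by auto
    then obtain A B where AB: "clopen_in Y A" "clopen_in Y B" "y \<in> A" "z \<in> B" "A \<inter> B = {}"
      using assms(3) yY unfolding totally_disconnected_set_def by metis
    have Ao: "openin (top_of_set Y) A" and Ac: "closedin (top_of_set Y) A"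
      using AB(1) unfolding clopen_in_def by auto
    have AY: "A \<subseteq> Y" using Ao openin_imp_subset by auto
    have Bc: "closedin (top_of_set Y) (Y - A)" using Ao by (simp add: closedin_def AY Diff_Diff_Int Int_absorb1)
    obtain S where S: "closed S" "A = Y \<inter> S" using Ac by (auto simp: closedin_closed)
    obtain T where T: "closed T" "Y - A = Y \<inter> T" using Bc by (auto simp: closedin_closed)
    have "closure A \<subseteq> S" using S closure_minimal by blast
    have "closure (Y - A) \<subseteq> T" using T closure_minimal by blast
    have s1: "A \<inter> closure (Y - A) = {}"
      using \<open>closure (Y - A) \<subseteq> T\<close> T AY by blast
    have s2: "(Y - A) \<inter> closure A = {}"
      using \<open>closure A \<subseteq> S\<close> S by blast
    have zB: "z \<in> Y - A" using AB z by auto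
    obtain U0 V0 where UV: "open U0" "open V0" "U0 \<inter> V0 = {}" "A \<subseteq> U0" "Y - A \<subseteq> V0"
      using sep[OF _ _ s1 s2] AB(3) zB by blast
    define U where "U = X \<inter> U0"
    have op: "openin (top_of_set X) U" unfolding U_def using UV(1) by (simp add: openin_open_Int)
    have yU: "y \<in> U" unfolding U_def using yX UV(4) AB(3) by auto
    have clV: "closure U \<inter> V0 = {}"
    proof -
      have "V0 \<inter> U = {}" unfolding U_def using UV(3) by auto
      then show ?thesis using open_Int_closure_eq_empty[OF UV(2), of U] by auto
    qed
    have "(closure U - U) \<inter> Y = {}"
    proof (rule ccontr)
      assume "(closure U - U) \<inter> Y \<noteq> {}"
      then obtain x where x: "x \<in> closure U" "x \<notin> U" "x \<in> Y" by auto
      then have "x \<notin> U0" using assms(2) unfolding U_def by auto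
      then have "x \<in> Y - A" using UV(4) x(3) by auto
      then show False using UV(5) clV x(1) by auto
    qed
    then have "U \<in> UU X Y y" using op yU unfolding UU_def by auto
    then have "z \<in> closure U" using z(1) unfolding Feq by auto
    then show False using clV UV(5) zB by auto
  qed
  have nd: "\<exists>a\<in>F. \<exists>b\<in>F. a \<noteq> b"
  proof (rule ccontr)
    assume "\<not> (\<exists>a\<in>F. \<exists>b\<in>F. a \<noteq> b)"
    then have Fy: "F \<subseteq> {y}" using yF by auto
    have "zero_dim_at Y y"
      unfolding zero_dim_at_def
    proof (intro allI impI, elim conjE)
      fix V assume V: "openin (top_of_set Y) V" "y \<in> V"
      obtain T where T: "open T" "V = Y \<inter> T" using V(1) by (auto simp: openin_open)
      have "\<Inter> (closure ` UU X Y y) \<subseteq> T" using Fy V(2) T(2) unfolding Feq by auto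
      then obtain U where U: "U \<in> UU X Y y" "closure U \<subseteq> T" using key[OF cX yX T(1)] by blast
      obtain T' where T': "open T'" "U = X \<inter> T'" using U(1) unfolding UU_def by (auto simp: openin_open)
      have fr: "(closure U - U) \<inter> Y = {}" "y \<in> U" using U(1) unfolding UU_def by auto
      have "U \<inter> Y = Y \<inter> T'" using T'(2) assms(2) by auto
      then have o: "openin (top_of_set Y) (U \<inter> Y)" using T'(1) by (simp add: openin_open_Int)
      have "U \<inter> Y = Y \<inter> closure U" using fr closure_subset by blast
      then have c: "closedin (top_of_set Y) (U \<inter> Y)" by (simp add: closedin_closed_Int)
      have "U \<inter> Y \<subseteq> V" using U(2) T(2) closure_subset by blast
      then show "\<exists>C. clopen_in Y C \<and> y \<in> C \<and> C \<subseteq> V"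
        using o c fr(2) yY unfolding clopen_in_def by blast
    qed
    then show False using nz by simp
  qed
  show ?thesis using sub cF con nd FY unfolding F_def by blast
qed

end
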